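(* The interval-sphere model structure on $p\mathsf{Ch}^*_\mathbb{Q}$ is compactly generated: every domain object of a map in $\mathbb{I}$ is compact with respect to relative sequential $\mathbb{I}$-cell complexes.
   Context: $p\mathsf{Ch}^*_\mathbb{Q}=\mathsf{Fun}([0,\infty),\mathsf{Ch}^*_\mathbb{Q})$, non-negatively graded rational cochain complexes. $S^k=\mathbb{Q}$ in degree $k$; $D^k$ ($k\ge1$) is $\mathbb{Q}$ in degrees $k-1,k$ with identity differential; $D^0=0$. $\mathbb{S}^k_{[s,t)}$ ($0\le s<t<\infty$) is $0$ at $r<s$, $S^k$ at $s\le r<t$, $D^k$ at $r\ge t$; $\mathbb{S}^k_{[s,\infty)}$ is $0$ at $r<s$, $S^k$ at $r\ge s$; $\mathbb{D}^k_s$ is $0$ at $r<s$, $D^k$ at $r\ge s$ (structure maps identities/inclusions). The interval-sphere model structure has weak equivalences the pointwise quasi-isomorphisms, generating cofibrations $\mathbb{I}=\{\mathbb{S}^k_{[s,t)}\to\mathbb{D}^k_s: k\in\mathbb{N},0\le s<t\le\infty\}$ and generating trivial cofibrations $\{\mathbb{D}^k_t\to\mathbb{D}^k_s:0\le s<t<\infty\}\cup\{0\to\mathbb{D}^k_s\}$. A relative sequential $\mathbb{I}$-cell complex is a map $\mathbb{X}\to\mathbb{Y}=\mathrm{colim}_{i\in\omega}\mathbb{Y}_i$ with $\mathbb{Y}_0=\mathbb{X}$ and each $\mathbb{Y}_{i+1}$ a pushout of $\mathbb{Y}_i$ along a direct sum (over an arbitrary set) of maps in $\mathbb{I}$. An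 object $\mathbb{U}$ is compact with respect to such complexes if $\mathrm{colim}_i\mathrm{Hom}(\mathbb{U},\mathbb{Y}_i)\to\mathrm{Hom}(\mathbb{U},\mathbb{Y})$ is a bijection for each of them. *)

theory Defs
  imports Complex_Main "HOL-Library.Function_Algebras" "HOL-Library.Extended_Real"
begin

text \<open>Rational vector spaces are modelled as rational subspaces of an ambient real vector
  space type (every rational vector space embeds this way).  To form direct sums we need
  functions into a real vector space to form a real vector space (pointwise).\<close>

instantiation "fun" :: (type, real_vector) real_vector
begin
definition scaleR_fun :: "real \<Rightarrow> ('a \<Rightarrow> 'b) \<Rightarrow> 'a \<Rightarrow> 'b" where
  "scaleR_fun c f = (\<lambda>x. c *\<^sub>R f x)"
instance
  by standard (auto simp: scaleR_fun_def fun_eq_iff scaleR_add_right scaleR_add_left)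
end

definition Qsubspace :: "'v::real_vector set \<Rightarrow> bool" where
  "Qsubspace V \<longleftrightarrow> 0 \<in> V \<and> (\<forall>x\<in>V. \<forall>y\<in>V. x + y \<in> V)
      \<and> (\<forall>q::rat. \<forall>x\<in>V. of_rat q *\<^sub>R x \<in> V)"

definition Qlinear_on :: "'v::real_vector set \<Rightarrow> ('v \<Rightarrow> 'w::real_vector) \<Rightarrow> bool" where
  "Qlinear_on V f \<longleftrightarrow> (\<forall>x\<in>V. \<forall>y\<in>V. f (x + y) = f x + f y)
      \<and> (\<forall>q::rat. \<forall>x\<in>V. f (of_rat q *\<^sub>R x) = of_rat q *\<^sub>R f x)"

section \<open>Persistence cochain complexes  pCh*_Q = Fun([0,oo), Ch*_Q)\<close>

text \<open>An object: for each time r (only r \<ge> 0 matters) and degree n :: nat (non-negative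
  grading) a rational vector space car r n, a differential dif r n : car r n \<rightarrow> car r (n+1)
  and structure maps str r r' n : car r n \<rightarrow> car r' n for r \<le> r'.\<close>

record 'v pcc =
  car :: "real \<Rightarrow> nat \<Rightarrow> 'v set"
  dif :: "real \<Rightarrow> nat \<Rightarrow> 'v \<Rightarrow> 'v"
  str :: "real \<Rightarrow> real \<Rightarrow> nat \<Rightarrow> 'v \<Rightarrow> 'v"

definition valid_pcc :: "'v::real_vector pcc \<Rightarrow> bool" where
  "valid_pcc X \<longleftrightarrow>
    (\<forall>r\<ge>0. \<forall>n. Qsubspace (car X r n)
       \<and> (\<forall>x\<in>car X r n. dif X r n x \<in> car X r (Suc n))
       \<and> Qlinear_on (car X r n) (dif X r n)
       \<and> (\<forall>x\<in>car X r n. dif X r (Suc n) (dif X r n x) = 0)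
       \<and> (\<forall>x\<in>car X r n. str X r r n x = x))
    \<and> (\<forall>r r' n. 0 \<le> r \<and> r \<le> r' \<longrightarrow>
         (\<forall>x\<in>car X r n. str X r r' n x \<in> car X r' n)
       \<and> Qlinear_on (car X r n) (str X r r' n)
       \<and> (\<forall>x\<in>car X r n. dif X r' n (str X r r' n x) = str X r r' (Suc n) (dif X r n x)))
    \<and> (\<forall>r r' r'' n. 0 \<le> r \<and> r \<le> r' \<and> r' \<le> r'' \<longrightarrow>
         (\<forall>x\<in>car X r n. str X r' r'' n (str X r r' n x) = str X r r'' n x))"

type_synonym ('v, 'w) pmap = "real \<Rightarrow> nat \<Rightarrow> 'v \<Rightarrow> 'w"

definition pmor :: "'v::real_vector pcc \<Rightarrow> 'w::real_vector pcc \<Rightarrow> ('v, 'w) pmap \<Rightarrow> bool" where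
  "pmor X Y f \<longleftrightarrow>
    (\<forall>r\<ge>0. \<forall>n. (\<forall>x\<in>car X r n. f r n x \<in> car Y r n)
       \<and> Qlinear_on (car X r n) (f r n)
       \<and> (\<forall>x\<in>car X r n. f r (Suc n) (dif X r n x) = dif Y r n (f r n x)))
    \<and> (\<forall>r r' n. 0 \<le> r \<and> r \<le> r' \<longrightarrow>
         (\<forall>x\<in>car X r n. f r' n (str X r r' n x) = str Y r r' n (f r n x)))"

text \<open>Equality of morphisms with source X (they only matter on the carriers of X).\<close>

definition meq :: "'v pcc \<Rightarrow> ('v, 'w) pmap \<Rightarrow> ('v, 'w) pmap \<Rightarrow> bool" where
  "meq X f g \<longleftrightarrow> (\<forall>r\<ge>0. \<forall>n. \<forall>x\<in>car X r n. f r n x = g r n x)"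

definition pcomp :: "('u, 'w) pmap \<Rightarrow> ('v, 'u) pmap \<Rightarrow> ('v, 'w) pmap" (infixl "\<bullet>" 55) where
  "pcomp g f = (\<lambda>r n x. g r n (f r n x))"

text \<open>All spheres and disks live in the ambient type real, with carrier \<rat> or {0}.
  sphere k s t = S^k_[s,t) (t = \<infinity> allowed), disk k s = D^k_s.\<close>

definition sphere :: "nat \<Rightarrow> real \<Rightarrow> ereal \<Rightarrow> real pcc" where
  "sphere k s t =
    (let C = (\<lambda>r n. if s \<le> r \<and> ereal r < t \<and> n = k then \<rat>
                    else if s \<le> r \<and> t \<le> ereal r \<and> 1 \<le> k \<and> (n = k \<or> Suc n = k) then \<rat>
                    else {0})
     in \<lparr> car = C,
          dif = (\<lambda>r n x. if s \<le> r \<and> t \<le> ereal r \<and> 1 \<le> k \<and> Suc n = k then x else 0),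
          str = (\<lambda>r r' n x. if C r' n = {0} then 0 else x) \<rparr>)"

definition disk :: "nat \<Rightarrow> real \<Rightarrow> real pcc" where
  "disk k s =
    (let C = (\<lambda>r n. if s \<le> r \<and> 1 \<le> k \<and> (n = k \<or> Suc n = k) then \<rat> else {0})
     in \<lparr> car = C,
          dif = (\<lambda>r n x. if s \<le> r \<and> 1 \<le> k \<and> Suc n = k then x else 0),
          str = (\<lambda>r r' n x. if C r' n = {0} then 0 else x) \<rparr>)"

text \<open>The generating cofibration S^k_[s,t) \<rightarrow> D^k_s (inclusion / identity / zero).\<close>

definition sph_incl :: "nat \<Rightarrow> real \<Rightarrow> (real, real) pmap" where
  "sph_incl k s = (\<lambda>r n x. if car (disk k s) r n = {0} then 0 else x)"

text \<open>Index triples (k, s, t) of the maps in \<I>: 0 \<le> s < t \<le> \<infinity>.\<close>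

definition Igen :: "(nat \<times> real \<times> ereal) set" where
  "Igen = {(k, s, t). 0 \<le> s \<and> ereal s < t}"

definition dsum :: "'a set \<Rightarrow> ('a \<Rightarrow> 'v::real_vector pcc) \<Rightarrow> ('a \<Rightarrow> 'v) pcc" where
  "dsum A X =
    \<lparr> car = (\<lambda>r n. {h. finite {a. h a \<noteq> 0} \<and> (\<forall>a. a \<notin> A \<longrightarrow> h a = 0)
                        \<and> (\<forall>a\<in>A. h a \<in> car (X a) r n)}),
      dif = (\<lambda>r n h a. if a \<in> A then dif (X a) r n (h a) else 0),
      str = (\<lambda>r r' n h a. if a \<in> A then str (X a) r r' n (h a) else 0) \<rparr>"

definition dsum_map :: "'a set \<Rightarrow> ('a \<Rightarrow> ('v, 'w::real_vector) pmap) \<Rightarrow> ('a \<Rightarrow> 'v, 'a \<Rightarrow> 'w) pmap" where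
  "dsum_map A f = (\<lambda>r n h a. if a \<in> A then f a r n (h a) else 0)"

text \<open>D is a pushout of B <-f- P -g-> C via u : B \<rightarrow> D, v : C \<rightarrow> D.  Colimits in
  pCh*_Q are computed pointwise and degreewise, and in rational vector spaces the pushout is
  (B \<oplus> C)/{(f p, - g p)}; so this says that the induced map from the explicit pushout
  to D is an isomorphism.\<close>

definition is_pushout ::
  "'p::real_vector pcc \<Rightarrow> 'b::real_vector pcc \<Rightarrow> 'c::real_vector pcc \<Rightarrow> ('p, 'b) pmap \<Rightarrow> ('p, 'c) pmap
   \<Rightarrow> 'd::real_vector pcc \<Rightarrow> ('b, 'd) pmap \<Rightarrow> ('c, 'd) pmap \<Rightarrow> bool" where
  "is_pushout P B C f g D u v \<longleftrightarrow>
     pmor P B f \<and> pmor P C g \<and> pmor B D u \<and> pmor C D v \<and> meq P (u \<bullet> f) (v \<bullet> g)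
     \<and> (\<forall>r\<ge>0. \<forall>n.
          (\<forall>z\<in>car D r n. \<exists>b\<in>car B r n. \<exists>c\<in>car C r n. z = u r n b + v r n c)
        \<and> (\<forall>b\<in>car B r n. \<forall>c\<in>car C r n. u r n b + v r n c = 0 \<longrightarrow>
             (\<exists>p\<in>car P r n. b = f r n p \<and> c = - g r n p)))"

fun ytr :: "(nat \<Rightarrow> ('v, 'v) pmap) \<Rightarrow> nat \<Rightarrow> nat \<Rightarrow> ('v, 'v) pmap" where
  "ytr y i 0 = (\<lambda>r n x. x)"
| "ytr y i (Suc m) = y (i + m) \<bullet> ytr y i m"

text \<open>L with maps \<iota> i : Y i \<rightarrow> L is the colimit of Y 0 \<rightarrow> Y 1 \<rightarrow> ... (computed pointwise
  and degreewise as a filtered colimit of rational vector spaces).\<close>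

definition is_seq_colim ::
  "(nat \<Rightarrow> 'v::real_vector pcc) \<Rightarrow> (nat \<Rightarrow> ('v, 'v) pmap) \<Rightarrow> 'w::real_vector pcc
   \<Rightarrow> (nat \<Rightarrow> ('v, 'w) pmap) \<Rightarrow> bool" where
  "is_seq_colim Y y L \<iota> \<longleftrightarrow>
     (\<forall>i. pmor (Y i) (Y (Suc i)) (y i) \<and> pmor (Y i) L (\<iota> i)
          \<and> meq (Y i) (\<iota> (Suc i) \<bullet> y i) (\<iota> i))
     \<and> (\<forall>r\<ge>0. \<forall>n.
          (\<forall>z\<in>car L r n. \<exists>i. \<exists>x\<in>car (Y i) r n. z = \<iota> i r n x)
        \<and> (\<forall>i. \<forall>x\<in>car (Y i) r n. \<iota> i r n x = 0 \<longrightarrow> (\<exists>m. ytr y i m r n x = 0)))"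

text \<open>Y 0 = X \<rightarrow> L = colim Y i, where Y (i+1) is the pushout of
  Y i <-\<phi> i- \<Oplus>_{a\<in>A i} S^{k}_[s,t) --\<Oplus> incl--> \<Oplus>_{a\<in>A i} D^k_s, with c i a = (k,s,t) \<in> \<I>.
  The map X \<rightarrow> L is \<iota> 0.\<close>

definition rel_seq_Icell_complex ::
  "(nat \<Rightarrow> 'a set) \<Rightarrow> (nat \<Rightarrow> 'a \<Rightarrow> nat \<times> real \<times> ereal)
   \<Rightarrow> (nat \<Rightarrow> ('a \<Rightarrow> real, 'v) pmap) \<Rightarrow> (nat \<Rightarrow> ('a \<Rightarrow> real, 'v) pmap)
   \<Rightarrow> (nat \<Rightarrow> 'v::real_vector pcc) \<Rightarrow> (nat \<Rightarrow> ('v, 'v) pmap)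
   \<Rightarrow> 'w::real_vector pcc \<Rightarrow> (nat \<Rightarrow> ('v, 'w) pmap) \<Rightarrow> bool" where
  "rel_seq_Icell_complex A c \<phi> \<psi> Y y L \<iota> \<longleftrightarrow>
     (\<forall>i. valid_pcc (Y i)) \<and> valid_pcc L
     \<and> (\<forall>i. \<forall>a\<in>A i. c i a \<in> Igen)
     \<and> (\<forall>i. is_pushout
             (dsum (A i) (\<lambda>a. case c i a of (k, s, t) \<Rightarrow> sphere k s t))
             (Y i)
             (dsum (A i) (\<lambda>a. case c i a of (k, s, t) \<Rightarrow> disk k s))
             (\<phi> i)
             (dsum_map (A i) (\<lambda>a. case c i a of (k, s, t) \<Rightarrow> sph_incl k s))
             (Y (Suc i)) (y i) (\<psi> i))
     \<and> is_seq_colim Y y L \<iota>"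

text \<open>Compactness of U: colim_i Hom(U, Y i) \<rightarrow> Hom(U, L) is a bijection (colimit of sets
  over \<omega>, written out: surjective and injective).\<close>

definition compact_wrt ::
  "'u::real_vector pcc \<Rightarrow> (nat \<Rightarrow> 'v::real_vector pcc) \<Rightarrow> (nat \<Rightarrow> ('v, 'v) pmap)
   \<Rightarrow> 'w::real_vector pcc \<Rightarrow> (nat \<Rightarrow> ('v, 'w) pmap) \<Rightarrow> bool" where
  "compact_wrt U Y y L \<iota> \<longleftrightarrow>
     (\<forall>h. pmor U L h \<longrightarrow> (\<exists>i g. pmor U (Y i) g \<and> meq U (\<iota> i \<bullet> g) h))
     \<and> (\<forall>i j g g'. pmor U (Y i) g \<longrightarrow> pmor U (Y j) g' \<longrightarrow> meq U (\<iota> i \<bullet> g) (\<iota> j \<bullet> g') \<longrightarrow>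
          (\<exists>m. i \<le> m \<and> j \<le> m \<and> meq U (ytr y i (m - i) \<bullet> g) (ytr y j (m - j) \<bullet> g')))"

end

theory Submission
  imports Defs
begin

lemma Ql_add: "Qlinear_on V f \<Longrightarrow> x \<in> V \<Longrightarrow> y \<in> V \<Longrightarrow> f (x + y) = f x + f y"
  by (simp add: Qlinear_on_def)

lemma Ql0: "Qlinear_on V f \<Longrightarrow> 0 \<in> V \<Longrightarrow> f 0 = 0"
  using Ql_add[of V f 0 0] by simp

lemma Ql_scale: assumes "Qlinear_on V f" "x \<in> V" "q \<in> \<rat>" shows "f (q *\<^sub>R x) = q *\<^sub>R f x"
  using assms by (auto simp: Qlinear_on_def elim!: Rats_cases)

lemma Qs0: "Qsubspace V \<Longrightarrow> 0 \<in> V" by (simp add: Qsubspace_def)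
lemma Qs_add: "Qsubspace V \<Longrightarrow> x \<in> V \<Longrightarrow> y \<in> V \<Longrightarrow> x + y \<in> V" by (simp add: Qsubspace_def)
lemma Qs_scale: "Qsubspace V \<Longrightarrow> x \<in> V \<Longrightarrow> q \<in> \<rat> \<Longrightarrow> q *\<^sub>R x \<in> V"
  by (auto simp: Qsubspace_def elim!: Rats_cases)
lemma Qs_minus: assumes "Qsubspace V" "x \<in> V" "y \<in> V" shows "x - y \<in> V"
proof -
  have q: "(-1::real) \<in> \<rat>" by simp
  have "(-1::real) *\<^sub>R y \<in> V" using Qs_scale[OF assms(1,3) q] .
  then have "x + (-1::real) *\<^sub>R y \<in> V" using Qs_add assms by blast
  then show ?thesis by simp
qed

lemma Ql_diff: assumes "Qlinear_on V f" "Qsubspace V" "x \<in> V" "y \<in> V"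
  shows "f (x - y) = f x - f y"
proof -
  have q: "(-1::real) \<in> \<rat>" by simp
  have m: "(-1::real) *\<^sub>R y \<in> V" using Qs_scale[OF assms(2,4) q] .
  have "f (x - y) = f (x + (-1::real) *\<^sub>R y)" by simp
  also have "\<dots> = f x + f ((-1::real) *\<^sub>R y)" using Ql_add[OF assms(1,3) m] .
  also have "f ((-1::real) *\<^sub>R y) = (-1::real) *\<^sub>R f y" using Ql_scale[OF assms(1,4) q] .
  finally show ?thesis by simp
qed

lemma valid_sub: "valid_pcc X \<Longrightarrow> 0 \<le> r \<Longrightarrow> Qsubspace (car X r n)"
  by (simp add: valid_pcc_def)
lemma valid_dif_car: "valid_pcc X \<Longrightarrow> 0 \<le> r \<Longrightarrow> x \<in> car X r n \<Longrightarrow> dif X r n x \<in> car X r (Suc n)"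
  by (simp add: valid_pcc_def)
lemma valid_dif_lin: "valid_pcc X \<Longrightarrow> 0 \<le> r \<Longrightarrow> Qlinear_on (car X r n) (dif X r n)"
  by (simp add: valid_pcc_def)
lemma valid_str_id: "valid_pcc X \<Longrightarrow> 0 \<le> r \<Longrightarrow> x \<in> car X r n \<Longrightarrow> str X r r n x = x"
  by (simp add: valid_pcc_def)
lemma valid_str_car: "valid_pcc X \<Longrightarrow> 0 \<le> r \<Longrightarrow> r \<le> r' \<Longrightarrow> x \<in> car X r n \<Longrightarrow> str X r r' n x \<in> car X r' n"
  by (simp add: valid_pcc_def)
lemma valid_str_lin: "valid_pcc X \<Longrightarrow> 0 \<le> r \<Longrightarrow> r \<le> r' \<Longrightarrow> Qlinear_on (car X r n) (str X r r' n)"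
  by (simp add: valid_pcc_def)
lemma valid_str_dif: "valid_pcc X \<Longrightarrow> 0 \<le> r \<Longrightarrow> r \<le> r' \<Longrightarrow> x \<in> car X r n \<Longrightarrow>
   dif X r' n (str X r r' n x) = str X r r' (Suc n) (dif X r n x)"
  by (simp add: valid_pcc_def)
lemma valid_str_comp: "valid_pcc X \<Longrightarrow> 0 \<le> r \<Longrightarrow> r \<le> r' \<Longrightarrow> r' \<le> r'' \<Longrightarrow> x \<in> car X r n \<Longrightarrow>
   str X r' r'' n (str X r r' n x) = str X r r'' n x"
  by (simp add: valid_pcc_def)

lemma pmor_car: "pmor X Y f \<Longrightarrow> 0 \<le> r \<Longrightarrow> x \<in> car X r n \<Longrightarrow> f r n x \<in> car Y r n"
  by (simp add: pmor_def)
lemma pmor_lin: "pmor X Y f \<Longrightarrow> 0 \<le> r \<Longrightarrow> Qlinear_on (car X r n) (f r n)"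
  by (simp add: pmor_def)
lemma pmor_dif: "pmor X Y f \<Longrightarrow> 0 \<le> r \<Longrightarrow> x \<in> car X r n \<Longrightarrow> f r (Suc n) (dif X r n x) = dif Y r n (f r n x)"
  by (simp add: pmor_def)
lemma pmor_str: "pmor X Y f \<Longrightarrow> 0 \<le> r \<Longrightarrow> r \<le> r' \<Longrightarrow> x \<in> car X r n \<Longrightarrow>
   f r' n (str X r r' n x) = str Y r r' n (f r n x)"
  by (simp add: pmor_def)

lemma pmor_id: "pmor X X (\<lambda>r n x. x)"
  by (simp add: pmor_def Qlinear_on_def)

lemma pmor_comp: assumes f: "pmor X Y f" and g: "pmor Y Z g" shows "pmor X Z (g \<bullet> f)"
  unfolding pmor_def pcomp_def
proof (intro conjI allI impI ballI)
  fix r :: real and n x assume r: "0 \<le> r" and x: "x \<in> car X r n"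
  show "g r n (f r n x) \<in> car Z r n" using pmor_car[OF g r pmor_car[OF f r x]] .
  show "g r (Suc n) (f r (Suc n) (dif X r n x)) = dif Z r n (g r n (f r n x))"
    using pmor_dif[OF f r x] pmor_dif[OF g r pmor_car[OF f r x]] by simp
next
  fix r :: real and n assume r: "0 \<le> r"
  show "Qlinear_on (car X r n) (\<lambda>x. g r n (f r n x))"
    unfolding Qlinear_on_def
  proof (intro conjI allI ballI)
    fix x y assume x: "x \<in> car X r n" and y: "y \<in> car X r n"
    show "g r n (f r n (x + y)) = g r n (f r n x) + g r n (f r n y)"
      using Ql_add[OF pmor_lin[OF f r] x y] Ql_add[OF pmor_lin[OF g r] pmor_car[OF f r x] pmor_car[OF f r y]]
      by simp
  next
    fix q :: rat and x assume x: "x \<in> car X r n"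
    show "g r n (f r n (of_rat q *\<^sub>R x)) = of_rat q *\<^sub>R g r n (f r n x)"
      using Ql_scale[OF pmor_lin[OF f r] x, of "of_rat q"] Ql_scale[OF pmor_lin[OF g r] pmor_car[OF f r x], of "of_rat q"]
      by simp
  qed
next
  fix r r' :: real and n x assume rr: "0 \<le> r \<and> r \<le> r'" and x: "x \<in> car X r n"
  show "g r' n (f r' n (str X r r' n x)) = str Z r r' n (g r n (f r n x))"
    using pmor_str[OF f _ _ x] pmor_str[OF g _ _ pmor_car[OF f _ x]] rr by simp
qed

lemma ytr_add: "ytr y i (a + b) = ytr y (i + a) b \<bullet> ytr y i a"
  by (induction b) (simp_all add: pcomp_def fun_eq_iff add.assoc)


locale sc =
  fixes Y :: "nat \<Rightarrow> 'v::real_vector pcc" and y :: "nat \<Rightarrow> ('v, 'v) pmap"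
    and L :: "'w::real_vector pcc" and \<iota> :: "nat \<Rightarrow> ('v, 'w) pmap"
  assumes vY: "\<And>i. valid_pcc (Y i)" and vL: "valid_pcc L" and col: "is_seq_colim Y y L \<iota>"
begin

lemma y_pmor: "pmor (Y i) (Y (Suc i)) (y i)" using col by (simp add: is_seq_colim_def)
lemma io_pmor: "pmor (Y i) L (\<iota> i)" using col by (simp add: is_seq_colim_def)
lemma io_meq: "0 \<le> r \<Longrightarrow> x \<in> car (Y i) r n \<Longrightarrow> \<iota> (Suc i) r n (y i r n x) = \<iota> i r n x"
  using col by (simp add: is_seq_colim_def meq_def pcomp_def)
lemma col_surj: "0 \<le> r \<Longrightarrow> z \<in> car L r n \<Longrightarrow> \<exists>i. \<exists>x\<in>car (Y i) r n. z = \<iota> i r n x"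
  using col by (simp add: is_seq_colim_def)
lemma col_inj: "0 \<le> r \<Longrightarrow> x \<in> car (Y i) r n \<Longrightarrow> \<iota> i r n x = 0 \<Longrightarrow> \<exists>m. ytr y i m r n x = 0"
  using col by (simp add: is_seq_colim_def)

lemma ytr_pmor: "pmor (Y i) (Y (i + m)) (ytr y i m)"
proof (induction m)
  case 0 then show ?case using pmor_id[of "Y i"] by simp
next
  case (Suc m)
  then show ?case using pmor_comp[OF Suc y_pmor[of "i + m"]] by simp
qed

lemma ytr_io: "0 \<le> r \<Longrightarrow> x \<in> car (Y i) r n \<Longrightarrow> \<iota> (i + m) r n (ytr y i m r n x) = \<iota> i r n x"
proof (induction m)
  case 0 then show ?case by simp
next
  case (Suc m)
  have "ytr y i m r n x \<in> car (Y (i + m)) r n" using pmor_car[OF ytr_pmor Suc.prems] .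
  then show ?case using io_meq[OF Suc.prems(1), of _ "i + m"] Suc by (simp add: pcomp_def)
qed

lemma lift: assumes r: "0 \<le> r" and z: "z \<in> car L r n"
  shows "\<exists>i0. \<forall>N\<ge>i0. \<exists>x\<in>car (Y N) r n. \<iota> N r n x = z"
proof -
  obtain i x where x: "x \<in> car (Y i) r n" and zx: "z = \<iota> i r n x" using col_surj[OF r z] by blast
  show ?thesis
  proof (intro exI allI impI)
    fix N assume "i \<le> N"
    then have N: "i + (N - i) = N" by simp
    have "ytr y i (N - i) r n x \<in> car (Y N) r n" using pmor_car[OF ytr_pmor r x, of "N - i"] N by simp
    moreover have "\<iota> N r n (ytr y i (N - i) r n x) = z" using ytr_io[OF r x, of "N - i"] N zx by simp
    ultimately show "\<exists>x\<in>car (Y N) r n. \<iota> N r n x = z" by blast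
  qed
qed

lemma evq: assumes r: "0 \<le> r" and x: "x \<in> car (Y i) r n" and x': "x' \<in> car (Y i) r n"
  and e: "\<iota> i r n x = \<iota> i r n x'"
  shows "\<forall>\<^sub>F q in sequentially. ytr y i q r n x = ytr y i q r n x'"
proof -
  have d: "x - x' \<in> car (Y i) r n" using Qs_minus[OF valid_sub[OF vY r] x x'] .
  have "\<iota> i r n (x - x') = 0"
    using Ql_diff[OF pmor_lin[OF io_pmor r] valid_sub[OF vY r] x x'] e by simp
  then obtain p where p: "ytr y i p r n (x - x') = 0" using col_inj[OF r d] by blast
  show ?thesis unfolding eventually_sequentially
  proof (intro exI allI impI)
    fix q assume "p \<le> q"
    then have q: "q = p + (q - p)" by simp
    have "ytr y i q r n (x - x') = ytr y (i + p) (q - p) r n (ytr y i p r n (x - x'))"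
      using ytr_add[of y i p "q - p"] q by (metis pcomp_def)
    also have "\<dots> = 0" unfolding p
      by (rule Ql0[OF pmor_lin[OF ytr_pmor r] Qs0[OF valid_sub[OF vY r]]])
    finally have "ytr y i q r n (x - x') = 0" .
    then show "ytr y i q r n x = ytr y i q r n x'"
      using Ql_diff[OF pmor_lin[OF ytr_pmor r] valid_sub[OF vY r] x x'] by simp
  qed
qed

end

lemma pmor_rat_det:
  fixes X :: "real pcc"
  assumes f: "pmor X Z f" and r0: "0 \<le> r0" "r0 \<le> r" and one0: "1 \<in> car X r0 n"
    and s1: "str X r0 r n 1 = 1" and one: "(1::real) \<in> car X r n" and x: "x \<in> \<rat>"
  shows "f r n x = x *\<^sub>R str Z r0 r n (f r0 n 1)"
proof -
  have r: "0 \<le> r" using r0 by simp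
  have "f r n x = f r n (x *\<^sub>R 1)" by simp
  also have "\<dots> = x *\<^sub>R f r n 1" using Ql_scale[OF pmor_lin[OF f r] one x] .
  also have "f r n 1 = str Z r0 r n (f r0 n 1)"
    using pmor_str[OF f r0 one0] s1 by simp
  finally show ?thesis .
qed

lemma Rats_ne0: "(\<rat>::real set) \<noteq> {0}"
proof
  assume "(\<rat>::real set) = {0}"
  then have "(1::real) \<in> {0}" using Rats_1 by metis
  then show False by simp
qed

locale sph =
  fixes k :: nat and s :: real and t :: ereal
  assumes s0: "0 \<le> s" and st: "ereal s < t"
begin

abbreviation "U \<equiv> sphere k s t"

lemma carU: "car U r n = (if s \<le> r \<and> ereal r < t \<and> n = k then \<rat>
                    else if s \<le> r \<and> t \<le> ereal r \<and> 1 \<le> k \<and> (n = k \<or> Suc n = k) then \<rat>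
                    else {0})"
  by (simp add: sphere_def Let_def)
lemma difU: "dif U r n x = (if s \<le> r \<and> t \<le> ereal r \<and> 1 \<le> k \<and> Suc n = k then x else 0)"
  by (simp add: sphere_def Let_def)
lemma strU: "str U r r' n x = (if car U r' n = {0} then 0 else x)"
  by (simp add: sphere_def Let_def)

lemma carU_cases: "car U r n = \<rat> \<or> car U r n = {0}"
  unfolding carU by auto

lemma zero_carU: "0 \<in> car U r n"
  using carU_cases[of r n] by (metis Rats_0 singletonI)

lemma carU_ne: "car U r n \<noteq> {0} \<longleftrightarrow> (s \<le> r \<and> n = k \<and> (ereal r < t \<or> 1 \<le> k)) \<or> (s \<le> r \<and> t \<le> ereal r \<and> 1 \<le> k \<and> Suc n = k)"
  unfolding carU using Rats_ne0 by (auto simp: not_less)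

lemma carU_ne': "car U r n \<noteq> {0} \<Longrightarrow> (s \<le> r \<and> n = k) \<or> (s \<le> r \<and> t \<le> ereal r \<and> 1 \<le> k \<and> Suc n = k)"
  using carU_ne by blast

lemma one_s: "1 \<in> car U s k"
  unfolding carU using st by simp

lemma t_fin: assumes "t \<le> ereal r" obtains t' where "t = ereal t'" "s < t'" "t' \<le> r"
  using assms st by (cases t) auto

lemma sph_ext:
  assumes f: "pmor U Z f" and g: "pmor U Z g" and e1: "f s k 1 = g s k 1"
    and e2: "\<And>t'. t = ereal t' \<Longrightarrow> 1 \<le> k \<Longrightarrow> f t' (k - 1) 1 = g t' (k - 1) 1"
  shows "meq U f g"
  unfolding meq_def
proof (intro allI impI ballI)
  fix r :: real and n x assume r: "0 \<le> r" and x: "x \<in> car U r n"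
  show "f r n x = g r n x"
  proof (cases "car U r n = {0}")
    case True
    then have "x = 0" using x by simp
    then show ?thesis using Ql0[OF pmor_lin[OF f r] zero_carU] Ql0[OF pmor_lin[OF g r] zero_carU] by simp
  next
    case False
    then have C: "car U r n = \<rat>" using carU_cases by blast
    have one: "(1::real) \<in> car U r n" using C by simp
    have xq: "x \<in> \<rat>" using x C by simp
    have s1: "str U r0 r n 1 = 1" for r0 using False strU by simp
    from carU_ne'[OF False] show ?thesis
    proof (elim disjE conjE)
      assume sr: "s \<le> r" and nk: "n = k"
      have one0: "1 \<in> car U s n" using one_s nk by simp
      show ?thesis
        using pmor_rat_det[OF f s0 sr one0 s1 one xq]
          pmor_rat_det[OF g s0 sr one0 s1 one xq] e1 nk by simp
    next
      assume sr: "s \<le> r" and tr: "t \<le> ereal r" and k1: "1 \<le> k" and nk: "Suc n = k"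
      obtain t' where tt: "t = ereal t'" "s < t'" "t' \<le> r" using t_fin[OF tr] .
      have t0: "0 \<le> t'" using tt s0 by simp
      have one': "1 \<in> car U t' n" unfolding carU using tt nk by auto
      have nk': "n = k - 1" using nk by simp
      show ?thesis
        using pmor_rat_det[OF f t0 tt(3) one' s1 one xq]
          pmor_rat_det[OF g t0 tt(3) one' s1 one xq] e2[OF tt(1) k1] nk' by simp
    qed
  qed
qed

definition sdata :: "'w::real_vector pcc \<Rightarrow> 'w \<Rightarrow> 'w \<Rightarrow> bool" where
  "sdata Z a b \<longleftrightarrow> a \<in> car Z s k \<and> dif Z s k a = 0 \<and>
     (\<forall>t'. t = ereal t' \<longrightarrow> (if k = 0 then str Z s t' 0 a = 0
        else b \<in> car Z t' (k - 1) \<and> dif Z t' (k - 1) b = str Z s t' k a))"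

lemma sdata_a: "sdata Z a b \<Longrightarrow> a \<in> car Z s k \<and> dif Z s k a = 0"
  unfolding sdata_def by blast

lemma sdata_b: assumes "sdata Z a b" "t = ereal t'" "1 \<le> k" "Suc n = k"
  shows "b \<in> car Z t' n \<and> dif Z t' n b = str Z s t' k a"
proof -
  have "k - 1 = n" "k \<noteq> 0" using assms(4) by auto
  then show ?thesis using assms(1,2) unfolding sdata_def by metis
qed

lemma sdata_k0: assumes "sdata Z a b" "t = ereal t'" "k = 0"
  shows "str Z s t' 0 a = 0"
  using assms unfolding sdata_def by metis

lemma sph_data:
  assumes g: "pmor U Z g"
  shows "sdata Z (g s k 1) (g (real_of_ereal t) (k - 1) 1)"
  unfolding sdata_def
proof (intro conjI allI impI)
  show "g s k 1 \<in> car Z s k" using pmor_car[OF g s0 one_s] .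
  have "g s (Suc k) (dif U s k 1) = dif Z s k (g s k 1)" using pmor_dif[OF g s0 one_s] .
  moreover have "dif U s k 1 = 0" using difU by simp
  moreover have "g s (Suc k) 0 = 0" using Ql0[OF pmor_lin[OF g s0] zero_carU] .
  ultimately show "dif Z s k (g s k 1) = 0" by simp
next
  fix t' assume tt: "t = ereal t'"
  have st': "s \<le> t'" using st tt by simp
  have t0: "0 \<le> t'" using st' s0 by simp
  show "if k = 0 then str Z s t' 0 (g s k 1) = 0
        else g (real_of_ereal t) (k - 1) 1 \<in> car Z t' (k - 1) \<and>
          dif Z t' (k - 1) (g (real_of_ereal t) (k - 1) 1) = str Z s t' k (g s k 1)"
  proof (cases "k = 0")
    case True
    have "g t' k (str U s t' k 1) = str Z s t' k (g s k 1)" using pmor_str[OF g s0 st' one_s] .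
    moreover have "str U s t' k 1 = 0" using strU carU True tt by simp
    moreover have "g t' k 0 = 0" using Ql0[OF pmor_lin[OF g t0] zero_carU] .
    ultimately show ?thesis using True by simp
  next
    case False
    define n where "n = k - 1"
    have nk: "Suc n = k" using False n_def by simp
    have one': "1 \<in> car U t' n" unfolding carU using tt nk st' by auto
    have c1: "g t' n 1 \<in> car Z t' n" using pmor_car[OF g t0 one'] .
    have "g t' (Suc n) (dif U t' n 1) = dif Z t' n (g t' n 1)" using pmor_dif[OF g t0 one'] .
    moreover have "dif U t' n 1 = 1" using difU tt nk st' by simp
    moreover have "g t' k (str U s t' k 1) = str Z s t' k (g s k 1)" using pmor_str[OF g s0 st' one_s] .
    moreover have "str U s t' k 1 = 1" using strU carU tt nk st' Rats_ne0 by auto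
    ultimately show ?thesis using False c1 nk tt n_def by simp
  qed
qed

definition ev :: "'w::real_vector pcc \<Rightarrow> 'w \<Rightarrow> 'w \<Rightarrow> real \<Rightarrow> nat \<Rightarrow> 'w" where
  "ev Z a b r n = (if n = k \<and> s \<le> r then str Z s r k a
      else if Suc n = k \<and> t \<le> ereal r then str Z (real_of_ereal t) r n b else 0)"

definition emap :: "'w::real_vector pcc \<Rightarrow> 'w \<Rightarrow> 'w \<Rightarrow> (real, 'w) pmap" where
  "emap Z a b = (\<lambda>r n x. x *\<^sub>R ev Z a b r n)"

lemma emap_s: "valid_pcc Z \<Longrightarrow> a \<in> car Z s k \<Longrightarrow> emap Z a b s k 1 = a"
  unfolding emap_def ev_def using valid_str_id[OF _ s0] by simp

lemma emap_t: assumes "valid_pcc Z" "t = ereal t'" "1 \<le> k" "b \<in> car Z t' (k - 1)"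
  shows "emap Z a b t' (k - 1) 1 = b"
proof -
  have "s \<le> t'" using st assms(2) by simp
  moreover have "k - 1 \<noteq> k" using assms(3) by simp
  ultimately show ?thesis unfolding emap_def ev_def using assms valid_str_id[OF assms(1), of t'] s0 by simp
qed

lemma ev_car: assumes Z: "valid_pcc Z" and d: "sdata Z a b" and r: "0 \<le> r" and ne: "car U r n \<noteq> {0}"
  shows "ev Z a b r n \<in> car Z r n"
  using carU_ne'[OF ne]
proof (elim disjE conjE)
  assume sr: "s \<le> r" and nk: "n = k"
  show ?thesis unfolding ev_def using nk sr valid_str_car[OF Z s0 sr] d by (simp add: sdata_def)
next
  assume sr: "s \<le> r" and tr: "t \<le> ereal r" and k1: "1 \<le> k" and nk: "Suc n = k"
  obtain t' where tt: "t = ereal t'" "s < t'" "t' \<le> r" using t_fin[OF tr] .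
  have t0: "0 \<le> t'" using tt s0 by simp
  have b: "b \<in> car Z t' n" using sdata_b[OF d tt(1) k1 nk] by auto
  show ?thesis unfolding ev_def using nk tr tt valid_str_car[OF Z t0 tt(3) b] by simp
qed

lemma sph_construct: assumes Z: "valid_pcc Z" and d: "sdata Z a b"
  shows "pmor U Z (emap Z a b)"
  unfolding pmor_def
proof (intro conjI allI impI ballI)
  fix r :: real and n x assume r: "0 \<le> r" and x: "x \<in> car U r n"
  show "emap Z a b r n x \<in> car Z r n"
  proof (cases "car U r n = {0}")
    case True then show ?thesis using x Qs0[OF valid_sub[OF Z r]] by (simp add: emap_def)
  next
    case False
    then have xq: "x \<in> \<rat>" using x carU_cases by blast
    show ?thesis unfolding emap_def using Qs_scale[OF valid_sub[OF Z r] ev_car[OF Z d r False] xq] .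
  qed
  show "emap Z a b r (Suc n) (dif U r n x) = dif Z r n (emap Z a b r n x)"
  proof (cases "car U r n = {0}")
    case True
    then have "x = 0" using x by simp
    then show ?thesis unfolding emap_def using difU Ql0[OF valid_dif_lin[OF Z r] Qs0[OF valid_sub[OF Z r]]] by simp
  next
    case False
    then have xq: "x \<in> \<rat>" using x carU_cases by blast
    have R: "dif Z r n (emap Z a b r n x) = x *\<^sub>R dif Z r n (ev Z a b r n)"
      unfolding emap_def using Ql_scale[OF valid_dif_lin[OF Z r] ev_car[OF Z d r False] xq] .
    have a: "a \<in> car Z s k" and da: "dif Z s k a = 0" using sdata_a[OF d] by auto
    from carU_ne'[OF False] show ?thesis
    proof (elim disjE conjE)
      assume sr: "s \<le> r" and nk: "n = k"
      have "dif Z r k (str Z s r k a) = str Z s r (Suc k) (dif Z s k a)" using valid_str_dif[OF Z s0 sr a] .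
      also have "\<dots> = 0" using da Ql0[OF valid_str_lin[OF Z s0 sr] Qs0[OF valid_sub[OF Z s0]]] by simp
      finally have "dif Z r n (ev Z a b r n) = 0" unfolding ev_def using nk sr by simp
      moreover have "dif U r n x = 0" using difU nk by simp
      ultimately show ?thesis using R by (simp add: emap_def)
    next
      assume sr: "s \<le> r" and tr: "t \<le> ereal r" and k1: "1 \<le> k" and nk: "Suc n = k"
      obtain t' where tt: "t = ereal t'" "s < t'" "t' \<le> r" using t_fin[OF tr] .
      have t0: "0 \<le> t'" using tt s0 by simp
      have b: "b \<in> car Z t' n" and db: "dif Z t' n b = str Z s t' k a"
        using sdata_b[OF d tt(1) k1 nk] by auto
      have "dif Z r n (str Z t' r n b) = str Z t' r (Suc n) (dif Z t' n b)" using valid_str_dif[OF Z t0 tt(3) b] .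
      also have "\<dots> = str Z s r k a" using db nk valid_str_comp[OF Z s0 _ tt(3) a] tt by simp
      finally have "dif Z r n (ev Z a b r n) = str Z s r k a" unfolding ev_def using nk tr tt by simp
      moreover have "dif U r n x = x" using difU nk sr tr k1 by simp
      moreover have "ev Z a b r (Suc n) = str Z s r k a" unfolding ev_def using nk sr by simp
      ultimately show ?thesis using R by (simp add: emap_def)
    qed
  qed
next
  fix r :: real and n assume r: "0 \<le> r"
  show "Qlinear_on (car U r n) (emap Z a b r n)"
    unfolding Qlinear_on_def emap_def by (simp add: scaleR_add_left)
next
  fix r r' :: real and n x assume rr: "0 \<le> r \<and> r \<le> r'" and x: "x \<in> car U r n"
  have r: "0 \<le> r" and rr': "r \<le> r'" using rr by auto
  show "emap Z a b r' n (str U r r' n x) = str Z r r' n (emap Z a b r n x)"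
  proof (cases "car U r n = {0}")
    case True
    then have "x = 0" using x by simp
    then show ?thesis unfolding emap_def using strU Ql0[OF valid_str_lin[OF Z r rr'] Qs0[OF valid_sub[OF Z r]]] by simp
  next
    case False
    then have xq: "x \<in> \<rat>" using x carU_cases by blast
    have R: "str Z r r' n (emap Z a b r n x) = x *\<^sub>R str Z r r' n (ev Z a b r n)"
      unfolding emap_def using Ql_scale[OF valid_str_lin[OF Z r rr'] ev_car[OF Z d r False] xq] .
    have a: "a \<in> car Z s k" using sdata_a[OF d] by auto
    show ?thesis
    proof (cases "car U r' n = {0}")
      case True
      have L0: "emap Z a b r' n (str U r r' n x) = 0" using True strU by (simp add: emap_def)
      from carU_ne'[OF False] have "str Z r r' n (ev Z a b r n) = 0"
      proof (elim disjE conjE)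
        assume sr: "s \<le> r" and nk: "n = k"
        have sr': "s \<le> r'" using sr rr' by simp
        from True nk sr' have tr': "t \<le> ereal r'" and k0: "k = 0" unfolding carU
          by (auto simp: not_less Rats_ne0 split: if_splits)
        obtain t' where tt: "t = ereal t'" "s < t'" "t' \<le> r'" using t_fin[OF tr'] .
        have t0: "0 \<le> t'" using tt s0 by simp
        have sa: "str Z s t' 0 a = 0" using sdata_k0[OF d tt(1) k0] .
        have "str Z r r' n (ev Z a b r n) = str Z r r' k (str Z s r k a)" unfolding ev_def using nk sr by simp
        also have "\<dots> = str Z s r' k a" using valid_str_comp[OF Z s0 sr rr' a] .
        also have "\<dots> = str Z t' r' k (str Z s t' k a)" using valid_str_comp[OF Z s0 _ tt(3) a] tt by simp
        also have "\<dots> = 0" using sa k0 Ql0[OF valid_str_lin[OF Z t0 tt(3)] Qs0[OF valid_sub[OF Z t0]]] by simp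
        finally show ?thesis .
      next
        assume sr: "s \<le> r" and tr: "t \<le> ereal r" and k1: "1 \<le> k" and nk: "Suc n = k"
        have "car U r' n \<noteq> {0}" unfolding carU_ne using sr tr k1 nk rr' order_trans[OF tr] by auto
        then show ?thesis using True by simp
      qed
      then show ?thesis using L0 R by simp
    next
      case False2: False
      have L1: "emap Z a b r' n (str U r r' n x) = x *\<^sub>R ev Z a b r' n" using False2 strU by (simp add: emap_def)
      from carU_ne'[OF False] have "ev Z a b r' n = str Z r r' n (ev Z a b r n)"
      proof (elim disjE conjE)
        assume sr: "s \<le> r" and nk: "n = k"
        show ?thesis unfolding ev_def using nk sr rr' valid_str_comp[OF Z s0 sr rr' a] by simp
      next
        assume sr: "s \<le> r" and tr: "t \<le> ereal r" and k1: "1 \<le> k" and nk: "Suc n = k"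
        obtain t' where tt: "t = ereal t'" "s < t'" "t' \<le> r" using t_fin[OF tr] .
        have t0: "0 \<le> t'" using tt s0 by simp
        have b: "b \<in> car Z t' n" using sdata_b[OF d tt(1) k1 nk] by auto
        have tr': "t \<le> ereal r'" using tr rr' order_trans by fastforce
        show ?thesis unfolding ev_def using nk tr tr' tt valid_str_comp[OF Z t0 tt(3) rr' b] by simp
      qed
      then show ?thesis using L1 R by simp
    qed
  qed
qed

end

theorem mainTheorem4:
  fixes A :: "nat \<Rightarrow> 'a set" and c :: "nat \<Rightarrow> 'a \<Rightarrow> nat \<times> real \<times> ereal"
    and \<phi> \<psi> :: "nat \<Rightarrow> ('a \<Rightarrow> real, 'v::real_vector) pmap"
    and Y :: "nat \<Rightarrow> 'v pcc" and y :: "nat \<Rightarrow> ('v, 'v) pmap"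
    and L :: "'w::real_vector pcc" and \<iota> :: "nat \<Rightarrow> ('v, 'w) pmap"
  assumes "rel_seq_Icell_complex A c \<phi> \<psi> Y y L \<iota>"
    and "(k, s, t) \<in> Igen"
  shows "compact_wrt (sphere k s t) Y y L \<iota>"
proof -
  have vY: "\<And>i. valid_pcc (Y i)" and vL: "valid_pcc L" and col: "is_seq_colim Y y L \<iota>"
    using assms(1) unfolding rel_seq_Icell_complex_def by auto
  interpret sc Y y L \<iota> using vY vL col by unfold_locales
  have s0: "0 \<le> s" and st: "ereal s < t" using assms(2) unfolding Igen_def by auto
  interpret sph k s t using s0 st by unfold_locales
  define tr where "tr = real_of_ereal t"
  define Bt where "Bt \<longleftrightarrow> (\<exists>t'. t = ereal t') \<and> 1 \<le> k"
  have Bt: "t = ereal tr" "s < tr" "0 \<le> tr" "Suc (k - 1) = k" "1 \<le> k" if "Bt"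
    using that st s0 unfolding Bt_def tr_def by auto
  show ?thesis unfolding compact_wrt_def
  proof (intro conjI allI impI)
    fix h assume h: "pmor U L h"
    define a0 where "a0 = h s k 1"
    define b0 where "b0 = h tr (k - 1) 1"
    have D: "sdata L a0 b0" unfolding a0_def b0_def tr_def using sph_data[OF h] .
    have a0c: "a0 \<in> car L s k" and da0: "dif L s k a0 = 0" using sdata_a[OF D] by auto
    obtain i0 where i0: "\<forall>N\<ge>i0. \<exists>x\<in>car (Y N) s k. \<iota> N s k x = a0" using lift[OF s0 a0c] by blast
    obtain j0 where j0: "Bt \<Longrightarrow> \<forall>N\<ge>j0. \<exists>x\<in>car (Y N) tr (k - 1). \<iota> N tr (k - 1) x = b0"
    proof (cases Bt)
      case True
      have "b0 \<in> car L tr (k - 1)" using sdata_b[OF D Bt(1)[OF True] Bt(5)[OF True] Bt(4)[OF True]] by simp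
      then show ?thesis using that lift[OF Bt(3)[OF True]] by blast
    next
      case False then show ?thesis using that by blast
    qed
    define N where "N = max i0 j0"
    have Ni0: "i0 \<le> N" and Nj0: "j0 \<le> N" unfolding N_def by auto
    obtain a where a: "a \<in> car (Y N) s k" and ia: "\<iota> N s k a = a0" using i0 Ni0 by blast
    obtain b where b: "Bt \<Longrightarrow> b \<in> car (Y N) tr (k - 1) \<and> \<iota> N tr (k - 1) b = b0"
    proof (cases Bt)
      case True then show ?thesis using that j0 Nj0 by blast
    next
      case False then show ?thesis using that by blast
    qed
    have z1: "0 \<in> car (Y N) r n" if "0 \<le> r" for r n using Qs0[OF valid_sub[OF vY that]] .
    have E1: "\<forall>\<^sub>F q in sequentially. ytr y N q s (Suc k) (dif (Y N) s k a) = ytr y N q s (Suc k) 0"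
    proof (rule evq[OF s0 valid_dif_car[OF vY s0 a] z1[OF s0]])
      show "\<iota> N s (Suc k) (dif (Y N) s k a) = \<iota> N s (Suc k) 0"
        using pmor_dif[OF io_pmor s0 a] ia da0 Ql0[OF pmor_lin[OF io_pmor s0] z1[OF s0]] by simp
    qed
    have E2: "\<forall>\<^sub>F q in sequentially. Bt \<longrightarrow>
       ytr y N q tr k (dif (Y N) tr (k - 1) b) = ytr y N q tr k (str (Y N) s tr k a)"
    proof (cases Bt)
      case True
      note B = Bt[OF True]
      have bc: "b \<in> car (Y N) tr (k - 1)" and ib: "\<iota> N tr (k - 1) b = b0" using b True by auto
      have db: "dif (Y N) tr (k - 1) b \<in> car (Y N) tr k" using valid_dif_car[OF vY B(3) bc] B(4) by simp
      have sa: "str (Y N) s tr k a \<in> car (Y N) tr k" using valid_str_car[OF vY s0 _ a] B by simp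
      have "\<iota> N tr k (dif (Y N) tr (k - 1) b) = \<iota> N tr k (str (Y N) s tr k a)"
      proof -
        have "\<iota> N tr (Suc (k - 1)) (dif (Y N) tr (k - 1) b) = dif L tr (k - 1) b0"
          using pmor_dif[OF io_pmor B(3) bc] ib by simp
        also have "\<dots> = str L s tr k a0" using sdata_b[OF D B(1) B(5) B(4)] by simp
        also have "\<dots> = \<iota> N tr k (str (Y N) s tr k a)"
          using pmor_str[OF io_pmor s0 _ a, of tr] B ia by simp
        finally show ?thesis using B(4) by simp
      qed
      then show ?thesis using evq[OF B(3) db sa] by (simp add: True)
    next
      case False then show ?thesis by simp
    qed
    have E3: "\<forall>\<^sub>F q in sequentially. (\<forall>t'. t = ereal t' \<longrightarrow> k = 0 \<longrightarrow>
       ytr y N q t' 0 (str (Y N) s t' 0 a) = ytr y N q t' 0 0)"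
    proof (cases "k = 0 \<and> t = ereal tr")
      case True
      have st': "s \<le> tr" "0 \<le> tr" using True st s0 by auto
      have sa: "str (Y N) s tr 0 a \<in> car (Y N) tr 0" using valid_str_car[OF vY s0 st'(1) a] True by simp
      have "\<iota> N tr 0 (str (Y N) s tr 0 a) = str L s tr 0 a0"
        using pmor_str[OF io_pmor s0 st'(1) a] ia True by simp
      also have "\<dots> = 0" using sdata_k0[OF D] True by simp
      also have "\<dots> = \<iota> N tr 0 0" using Ql0[OF pmor_lin[OF io_pmor st'(2)] z1[OF st'(2)]] by simp
      finally have "\<iota> N tr 0 (str (Y N) s tr 0 a) = \<iota> N tr 0 0" .
      from evq[OF st'(2) sa z1[OF st'(2)] this] show ?thesis
        by eventually_elim (use True in auto)
    next
      case False
      have "\<forall>t'. t = ereal t' \<longrightarrow> k = 0 \<longrightarrow> False" using False by (auto simp: tr_def)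
      then have "\<forall>q. \<forall>t'. t = ereal t' \<longrightarrow> k = 0 \<longrightarrow> ytr y N q t' 0 (str (Y N) s t' 0 a) = ytr y N q t' 0 0"
        by blast
      then show ?thesis by (simp add: always_eventually)
    qed
    from eventually_conj[OF E1 eventually_conj[OF E2 E3]] obtain p where
      P: "ytr y N p s (Suc k) (dif (Y N) s k a) = ytr y N p s (Suc k) 0"
         "Bt \<Longrightarrow> ytr y N p tr k (dif (Y N) tr (k - 1) b) = ytr y N p tr k (str (Y N) s tr k a)"
         "\<And>t'. t = ereal t' \<Longrightarrow> k = 0 \<Longrightarrow> ytr y N p t' 0 (str (Y N) s t' 0 a) = ytr y N p t' 0 0"
      unfolding eventually_sequentially by blast
    define m where "m = N + p"
    define AA where "AA = ytr y N p s k a"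
    define BB where "BB = ytr y N p tr (k - 1) b"
    have ytrm: "pmor (Y N) (Y m) (ytr y N p)" using ytr_pmor m_def by simp
    have ytr0: "ytr y N p r n 0 = 0" if "0 \<le> r" for r n using Ql0[OF pmor_lin[OF ytrm that] z1[OF that]] .
    have Dm: "sdata (Y m) AA BB"
      unfolding sdata_def
    proof (intro conjI allI impI)
      show AAc: "AA \<in> car (Y m) s k" unfolding AA_def using pmor_car[OF ytrm s0 a] .
      show "dif (Y m) s k AA = 0" unfolding AA_def using pmor_dif[OF ytrm s0 a] P(1) ytr0[OF s0] by simp
    next
      fix t' assume tt: "t = ereal t'"
      have st': "s \<le> t'" "0 \<le> t'" "tr = t'" using tt st s0 tr_def by auto
      show "if k = 0 then str (Y m) s t' 0 AA = 0
            else BB \<in> car (Y m) t' (k - 1) \<and> dif (Y m) t' (k - 1) BB = str (Y m) s t' k AA"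
      proof (cases "k = 0")
        case True
        then show ?thesis unfolding AA_def using pmor_str[OF ytrm s0 st'(1) a] P(3)[OF tt True] ytr0[OF st'(2)]
          by simp
      next
        case False
        then have Btt: Bt unfolding Bt_def using tt by auto
        note B = Bt[OF Btt]
        have bc: "b \<in> car (Y N) tr (k - 1)" using b Btt by auto
        have "BB \<in> car (Y m) t' (k - 1)" unfolding BB_def using pmor_car[OF ytrm B(3) bc] st' by simp
        moreover have "dif (Y m) t' (k - 1) BB = str (Y m) s t' k AA"
        proof -
          have "dif (Y m) tr (k - 1) BB = ytr y N p tr (Suc (k - 1)) (dif (Y N) tr (k - 1) b)"
            unfolding BB_def using pmor_dif[OF ytrm B(3) bc] by simp
          also have "\<dots> = ytr y N p tr k (str (Y N) s tr k a)" using P(2)[OF Btt] B(4) by simp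
          also have "\<dots> = str (Y m) s tr k AA" unfolding AA_def using pmor_str[OF ytrm s0 _ a, of tr] B by simp
          finally show ?thesis using st' by simp
        qed
        ultimately show ?thesis using False by simp
      qed
    qed
    define g where "g = emap (Y m) AA BB"
    have g: "pmor U (Y m) g" unfolding g_def using sph_construct[OF vY Dm] .
    have "meq U (\<iota> m \<bullet> g) h"
    proof (rule sph_ext[OF pmor_comp[OF g io_pmor] h])
      have "(\<iota> m \<bullet> g) s k 1 = \<iota> m s k AA"
        unfolding pcomp_def g_def using emap_s[OF vY sdata_a[OF Dm, THEN conjunct1]] by simp
      also have "\<dots> = a0" unfolding AA_def m_def using ytr_io[OF s0 a] ia by simp
      finally show "(\<iota> m \<bullet> g) s k 1 = h s k 1" unfolding a0_def .
    next
      fix t' assume tt: "t = ereal t'" and k1: "1 \<le> k"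
      then have Btt: Bt unfolding Bt_def by auto
      note B = Bt[OF Btt]
      have tr': "tr = t'" using tt tr_def by simp
      have bc: "b \<in> car (Y N) tr (k - 1)" and ib: "\<iota> N tr (k - 1) b = b0" using b Btt by auto
      have BBc: "BB \<in> car (Y m) t' (k - 1)" using sdata_b[OF Dm tt k1 B(4)] by simp
      have "(\<iota> m \<bullet> g) t' (k - 1) 1 = \<iota> m t' (k - 1) BB"
        unfolding pcomp_def g_def using emap_t[OF vY tt k1 BBc] by simp
      also have "\<dots> = b0" unfolding BB_def m_def using ytr_io[OF B(3) bc] ib tr' by simp
      finally show "(\<iota> m \<bullet> g) t' (k - 1) 1 = h t' (k - 1) 1" unfolding b0_def tr' .
    qed
    then show "\<exists>i g. pmor U (Y i) g \<and> meq U (\<iota> i \<bullet> g) h" using g by blast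
  next
    fix i j g g'
    assume g: "pmor U (Y i) g" and g': "pmor U (Y j) g'" and e: "meq U (\<iota> i \<bullet> g) (\<iota> j \<bullet> g')"
    define N where "N = max i j"
    have Ni: "i + (N - i) = N" and Nj: "j + (N - j) = N" unfolding N_def by auto
    define G where "G = ytr y i (N - i) \<bullet> g"
    define G' where "G' = ytr y j (N - j) \<bullet> g'"
    have G: "pmor U (Y N) G" unfolding G_def using pmor_comp[OF g ytr_pmor, of "N - i"] Ni by simp
    have G': "pmor U (Y N) G'" unfolding G'_def using pmor_comp[OF g' ytr_pmor, of "N - j"] Nj by simp
    have GG: "\<iota> N r n (G r n x) = \<iota> N r n (G' r n x)" if r: "0 \<le> r" and x: "x \<in> car U r n" for r n x
    proof -
      have "\<iota> N r n (G r n x) = \<iota> i r n (g r n x)"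
        unfolding G_def pcomp_def using ytr_io[OF r pmor_car[OF g r x], of "N - i"] Ni by simp
      also have "\<dots> = \<iota> j r n (g' r n x)" using e r x by (simp add: meq_def pcomp_def)
      also have "\<dots> = \<iota> N r n (G' r n x)"
        unfolding G'_def pcomp_def using ytr_io[OF r pmor_car[OF g' r x], of "N - j"] Nj by simp
      finally show ?thesis .
    qed
    have E1: "\<forall>\<^sub>F q in sequentially. ytr y N q s k (G s k 1) = ytr y N q s k (G' s k 1)"
      using evq[OF s0 pmor_car[OF G s0 one_s] pmor_car[OF G' s0 one_s] GG[OF s0 one_s]] .
    have E2: "\<forall>\<^sub>F q in sequentially. Bt \<longrightarrow> ytr y N q tr (k - 1) (G tr (k - 1) 1) = ytr y N q tr (k - 1) (G' tr (k - 1) 1)"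
    proof (cases Bt)
      case True
      note B = Bt[OF True]
      have one': "1 \<in> car U tr (k - 1)" unfolding carU using B by auto
      show ?thesis using evq[OF B(3) pmor_car[OF G B(3) one'] pmor_car[OF G' B(3) one'] GG[OF B(3) one']]
        by (simp add: True)
    next
      case False then show ?thesis by simp
    qed
    from eventually_conj[OF E1 E2] obtain p where
      P: "ytr y N p s k (G s k 1) = ytr y N p s k (G' s k 1)"
         "Bt \<Longrightarrow> ytr y N p tr (k - 1) (G tr (k - 1) 1) = ytr y N p tr (k - 1) (G' tr (k - 1) 1)"
      unfolding eventually_sequentially by blast
    define m where "m = N + p"
    have c1: "ytr y i (m - i) \<bullet> g = ytr y N p \<bullet> G"
    proof -
      have "m - i = (N - i) + p" unfolding m_def N_def by simp
      then show ?thesis unfolding G_def using ytr_add[of y i "N - i" p] Ni by (simp add: pcomp_def fun_eq_iff)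
    qed
    have c2: "ytr y j (m - j) \<bullet> g' = ytr y N p \<bullet> G'"
    proof -
      have "m - j = (N - j) + p" unfolding m_def N_def by simp
      then show ?thesis unfolding G'_def using ytr_add[of y j "N - j" p] Nj by (simp add: pcomp_def fun_eq_iff)
    qed
    have ytrm: "pmor (Y N) (Y m) (ytr y N p)" using ytr_pmor m_def by simp
    have "meq U (ytr y N p \<bullet> G) (ytr y N p \<bullet> G')"
    proof (rule sph_ext[OF pmor_comp[OF G ytrm] pmor_comp[OF G' ytrm]])
      show "(ytr y N p \<bullet> G) s k 1 = (ytr y N p \<bullet> G') s k 1" using P(1) by (simp add: pcomp_def)
    next
      fix t' assume tt: "t = ereal t'" and k1: "1 \<le> k"
      then have Btt: Bt unfolding Bt_def by auto
      have tr': "tr = t'" using tt tr_def by simp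
      show "(ytr y N p \<bullet> G) t' (k - 1) 1 = (ytr y N p \<bullet> G') t' (k - 1) 1"
        using P(2)[OF Btt] tr' by (simp add: pcomp_def)
    qed
    moreover have "i \<le> m" "j \<le> m" unfolding m_def N_def by auto
    ultimately show "\<exists>m\<ge>i. j \<le> m \<and> meq U (ytr y i (m - i) \<bullet> g) (ytr y j (m - j) \<bullet> g')"
      using c1 c2 by auto
  qed
qed

end
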